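(* Let $\alpha,\beta>0$, $\mathbf{c}=(c_j)_{j\in\mathbb{Z}}\in L^\infty(\mathbb{R}_+,\ell^\infty(\mathbb{Z}))$ and $\zeta,\xi:\mathbb{R}_+\to\mathbb{R}$ continuous. Let $W_j,Q_j\in\mathscr{C}^1([0,+\infty),\mathbb{R})$ ($j\in\mathbb{Z}$) satisfy, for all $t>0$ and integers $\zeta(t)\le j\le\xi(t)$, $$W_j'(t)\ge-2\alpha W_j(t)+\beta(Q_j(t)+Q_{j+1}(t)),\qquad Q_j'(t)\ge c_j(t)Q_j(t)+\alpha(W_j(t)+W_{j-1}(t)).$$ Assume $W_j(0)\ge0$, $Q_j(0)\ge0$ for all integers $\zeta(0)-1\le j\le\xi(0)+1$, and $W_j(t)\ge0$, $Q_j(t)\ge0$ for all $t>0$ and integers $j\in[\zeta(t)-1,\zeta(t))\cup(\xi(t),\xi(t)+1]$. Then $W_j(t)\ge0$ and $Q_j(t)\ge0$ for all $t>0$ and integers $\zeta(t)\le j\le\xi(t)$. *)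

theory Defs
  imports "HOL-Analysis.Analysis"
begin

end

theory Submission
  imports Defs "HOL-Analysis.Analysis"
begin


context
  fixes \<alpha> \<beta> :: real
    and c :: "real \<Rightarrow> int \<Rightarrow> real"
    and \<zeta> \<xi> :: "real \<Rightarrow> real"
    and W Q W' Q' :: "int \<Rightarrow> real \<Rightarrow> real"
    and M \<kappa> \<epsilon> :: real
  assumes alpha_pos: "\<alpha> > 0" and beta_pos: "\<beta> > 0"
    and Mb: "\<forall>t\<ge>0. \<forall>j. \<bar>c t j\<bar> \<le> M"
    and kap: "\<kappa> = 2 * \<alpha> + 2 * \<beta> + M + 1"
    and eps: "\<epsilon> > 0"
    and zeta_cont: "continuous_on {0..} \<zeta>"
    and xi_cont: "continuous_on {0..} \<xi>"
    and W_deriv: "\<And>j t. t \<ge> 0 \<Longrightarrow> (W j has_real_derivative W' j t) (at t within {0..})"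
    and Q_deriv: "\<And>j t. t \<ge> 0 \<Longrightarrow> (Q j has_real_derivative Q' j t) (at t within {0..})"
    and ineqW: "\<And>t j. t > 0 \<Longrightarrow> \<zeta> t \<le> of_int j \<Longrightarrow> of_int j \<le> \<xi> t \<Longrightarrow>
        W' j t \<ge> - 2 * \<alpha> * W j t + \<beta> * (Q j t + Q (j + 1) t)"
    and ineqQ: "\<And>t j. t > 0 \<Longrightarrow> \<zeta> t \<le> of_int j \<Longrightarrow> of_int j \<le> \<xi> t \<Longrightarrow>
        Q' j t \<ge> c t j * Q j t + \<alpha> * (W j t + W (j - 1) t)"
    and init: "\<And>j. \<zeta> 0 - 1 \<le> of_int j \<Longrightarrow> of_int j \<le> \<xi> 0 + 1 \<Longrightarrow>
        W j 0 \<ge> 0 \<and> Q j 0 \<ge> 0"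
    and bdry: "\<And>t j. t > 0 \<Longrightarrow>
        ((\<zeta> t - 1 \<le> of_int j \<and> of_int j < \<zeta> t) \<or> (\<xi> t < of_int j \<and> of_int j \<le> \<xi> t + 1)) \<Longrightarrow>
        W j t \<ge> 0 \<and> Q j t \<ge> 0"
begin

definition good :: "real \<Rightarrow> bool" where
  "good t \<longleftrightarrow> (\<forall>j::int. \<zeta> t \<le> of_int j \<and> of_int j \<le> \<xi> t \<longrightarrow>
     W j t + \<epsilon> * exp (\<kappa> * t) > 0 \<and> Q j t + \<epsilon> * exp (\<kappa> * t) > 0)"

lemma good0: "good 0"
  unfolding good_def
proof (intro allI impI)
  fix j :: int assume "\<zeta> 0 \<le> of_int j \<and> of_int j \<le> \<xi> 0"
  then have "W j 0 \<ge> 0 \<and> Q j 0 \<ge> 0" by (intro init) auto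
  then show "W j 0 + \<epsilon> * exp (\<kappa> * 0) > 0 \<and> Q j 0 + \<epsilon> * exp (\<kappa> * 0) > 0"
    using eps by auto
qed

lemma isCont_zeta: "t > 0 \<Longrightarrow> isCont \<zeta> t"
  by (rule continuous_on_interior[OF zeta_cont]) auto

lemma isCont_xi: "t > 0 \<Longrightarrow> isCont \<xi> t"
  by (rule continuous_on_interior[OF xi_cont]) auto

lemma W_at: "t > 0 \<Longrightarrow> (W j has_real_derivative W' j t) (at t)"
proof -
  assume t: "t > 0"
  have "(W j has_real_derivative W' j t) (at t within {0<..})"
    by (rule has_field_derivative_subset[OF W_deriv]) (use t in auto)
  then show ?thesis using at_within_open[of t "{0<..}"] t by auto
qed

lemma Q_at: "t > 0 \<Longrightarrow> (Q j has_real_derivative Q' j t) (at t)"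
proof -
  assume t: "t > 0"
  have "(Q j has_real_derivative Q' j t) (at t within {0<..})"
    by (rule has_field_derivative_subset[OF Q_deriv]) (use t in auto)
  then show ?thesis using at_within_open[of t "{0<..}"] t by auto
qed

lemma left_pos:
  assumes t: "t > 0" and g: "\<forall>s. 0 < s \<and> s < t \<longrightarrow> good s"
    and k: "\<zeta> t \<le> of_int k" "of_int k \<le> \<xi> t"
  shows "\<exists>d>0. \<forall>s. t - d < s \<and> s < t \<longrightarrow>
     W k s + \<epsilon> * exp (\<kappa> * s) > 0 \<and> Q k s + \<epsilon> * exp (\<kappa> * s) > 0"
proof -
  obtain d1 where d1: "d1 > 0" "\<forall>s. dist s t < d1 \<longrightarrow> dist (\<zeta> s) (\<zeta> t) < 1"
    using isCont_zeta[OF t] unfolding continuous_at_eps_delta by (meson zero_less_one)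
  obtain d2 where d2: "d2 > 0" "\<forall>s. dist s t < d2 \<longrightarrow> dist (\<xi> s) (\<xi> t) < 1"
    using isCont_xi[OF t] unfolding continuous_at_eps_delta by (meson zero_less_one)
  define d where "d = min t (min d1 d2)"
  have "d > 0" using d1 d2 t by (simp add: d_def)
  moreover have "W k s + \<epsilon> * exp (\<kappa> * s) > 0 \<and> Q k s + \<epsilon> * exp (\<kappa> * s) > 0"
    if s: "t - d < s" "s < t" for s
  proof -
    have s0: "s > 0" using s by (simp add: d_def)
    have "dist s t < d1" "dist s t < d2" using s by (auto simp: d_def dist_real_def)
    then have z: "\<bar>\<zeta> s - \<zeta> t\<bar> < 1" and x: "\<bar>\<xi> s - \<xi> t\<bar> < 1"
      using d1 d2 by (auto simp: dist_real_def)
    have E: "\<epsilon> * exp (\<kappa> * s) > 0" using eps by simp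
    show ?thesis
    proof (cases "\<zeta> s \<le> of_int k \<and> of_int k \<le> \<xi> s")
      case True
      then show ?thesis using g s0 s(2) unfolding good_def by blast
    next
      case False
      then have "(\<zeta> s - 1 \<le> of_int k \<and> of_int k < \<zeta> s) \<or> (\<xi> s < of_int k \<and> of_int k \<le> \<xi> s + 1)"
        using z x k by auto
      then have "W k s \<ge> 0 \<and> Q k s \<ge> 0" using bdry[OF s0] by blast
      then show ?thesis using E by auto
    qed
  qed
  ultimately show ?thesis by blast
qed

lemma left_nonneg:
  assumes t: "t > 0" and g: "\<forall>s. 0 < s \<and> s < t \<longrightarrow> good s"
    and k: "\<zeta> t - 1 \<le> of_int k" "of_int k \<le> \<xi> t + 1"
  shows "W k t + \<epsilon> * exp (\<kappa> * t) \<ge> 0 \<and> Q k t + \<epsilon> * exp (\<kappa> * t) \<ge> 0"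
proof (cases "\<zeta> t \<le> of_int k \<and> of_int k \<le> \<xi> t")
  case True
  obtain d where d: "d > 0" "\<forall>s. t - d < s \<and> s < t \<longrightarrow>
     W k s + \<epsilon> * exp (\<kappa> * s) > 0 \<and> Q k s + \<epsilon> * exp (\<kappa> * s) > 0"
    using left_pos[OF t g] True by blast
  have ev: "eventually (\<lambda>s. W k s + \<epsilon> * exp (\<kappa> * s) > 0 \<and> Q k s + \<epsilon> * exp (\<kappa> * s) > 0) (at_left t)"
  proof -
    have "t - d < t" using d by simp
    then show ?thesis unfolding eventually_at_left[OF \<open>t - d < t\<close>] using d
      by (intro exI[of _ "t - d"]) auto
  qed
  have cW: "isCont (\<lambda>s. W k s + \<epsilon> * exp (\<kappa> * s)) t"
    using DERIV_isCont[OF W_at[OF t]] by (intro continuous_intros) auto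
  have cQ: "isCont (\<lambda>s. Q k s + \<epsilon> * exp (\<kappa> * s)) t"
    using DERIV_isCont[OF Q_at[OF t]] by (intro continuous_intros) auto
  have lW: "((\<lambda>s. W k s + \<epsilon> * exp (\<kappa> * s)) \<longlongrightarrow> W k t + \<epsilon> * exp (\<kappa> * t)) (at_left t)"
    using cW by (simp add: isCont_def filterlim_at_split)
  have lQ: "((\<lambda>s. Q k s + \<epsilon> * exp (\<kappa> * s)) \<longlongrightarrow> Q k t + \<epsilon> * exp (\<kappa> * t)) (at_left t)"
    using cQ by (simp add: isCont_def filterlim_at_split)
  have "0 \<le> W k t + \<epsilon> * exp (\<kappa> * t)"
    by (rule tendsto_lowerbound[OF lW]) (use ev in \<open>auto elim: eventually_mono\<close>)
  moreover have "0 \<le> Q k t + \<epsilon> * exp (\<kappa> * t)"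
    by (rule tendsto_lowerbound[OF lQ]) (use ev in \<open>auto elim: eventually_mono\<close>)
  ultimately show ?thesis by simp
next
  case False
  then have "(\<zeta> t - 1 \<le> of_int k \<and> of_int k < \<zeta> t) \<or> (\<xi> t < of_int k \<and> of_int k \<le> \<xi> t + 1)"
    using k by auto
  then have "W k t \<ge> 0 \<and> Q k t \<ge> 0" using bdry[OF t] by blast
  moreover have "\<epsilon> * exp (\<kappa> * t) > 0" using eps by simp
  ultimately show ?thesis by auto
qed

lemma M0: "M \<ge> 0"
  using Mb by (meson abs_ge_zero order_trans order_refl)

lemma first_good:
  assumes t: "t > 0" and g: "\<forall>s. 0 < s \<and> s < t \<longrightarrow> good s"
  shows "good t"
  unfolding good_def
proof (intro allI impI conjI)
  fix j :: int assume act: "\<zeta> t \<le> of_int j \<and> of_int j \<le> \<xi> t"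
  define E where "E = \<epsilon> * exp (\<kappa> * t)"
  have E0: "E > 0" using eps by (simp add: E_def)
  have nn: "W k t + E \<ge> 0 \<and> Q k t + E \<ge> 0" if "\<zeta> t - 1 \<le> of_int k" "of_int k \<le> \<xi> t + 1" for k
    using left_nonneg[OF t g that] by (simp add: E_def)
  have nj: "W j t + E \<ge> 0 \<and> Q j t + E \<ge> 0" using nn act by auto
  have nj1: "W (j+1) t + E \<ge> 0 \<and> Q (j+1) t + E \<ge> 0" using nn act by auto
  have nj2: "W (j-1) t + E \<ge> 0 \<and> Q (j-1) t + E \<ge> 0" using nn act by auto
  obtain d where d: "d > 0" "\<forall>s. t - d < s \<and> s < t \<longrightarrow>
     W j s + \<epsilon> * exp (\<kappa> * s) > 0 \<and> Q j s + \<epsilon> * exp (\<kappa> * s) > 0"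
    using left_pos[OF t g] act by blast
  have dexp: "((\<lambda>s. \<epsilon> * exp (\<kappa> * s)) has_real_derivative \<kappa> * E) (at t)"
    by (auto intro!: derivative_eq_intros simp: E_def)
  have kk: "\<kappa> - 2 * \<beta> > 0" "\<kappa> - M - 2 * \<alpha> > 0" using kap M0 alpha_pos beta_pos by auto
  have cM: "c t j \<le> M" using Mb t by (meson abs_le_D1 less_imp_le)
  show "W j t + \<epsilon> * exp (\<kappa> * t) > 0"
  proof (rule ccontr)
    assume "\<not> W j t + \<epsilon> * exp (\<kappa> * t) > 0"
    then have W0: "W j t = - E" using nj by (simp add: E_def)
    have "W' j t \<ge> - 2 * \<alpha> * W j t + \<beta> * (Q j t + Q (j + 1) t)"
      using ineqW[OF t] act by auto
    moreover have "\<beta> * (Q j t + Q (j + 1) t) \<ge> \<beta> * (- 2 * E)"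
      using nj nj1 beta_pos by (intro mult_left_mono) auto
    ultimately have "W' j t + \<kappa> * E \<ge> 2 * \<alpha> * E + (\<kappa> - 2 * \<beta>) * E"
      using W0 by (simp add: algebra_simps)
    moreover have "(\<kappa> - 2 * \<beta>) * E > 0" using kk E0 by simp
    ultimately have pos: "W' j t + \<kappa> * E > 0" using alpha_pos E0
      by (smt (verit) mult_pos_pos)
    have D: "((\<lambda>s. W j s + \<epsilon> * exp (\<kappa> * s)) has_real_derivative W' j t + \<kappa> * E) (at t)"
      by (intro DERIV_add W_at[OF t] dexp)
    obtain h0 where h0: "h0 > 0" "\<forall>h>0. h < h0 \<longrightarrow>
        W j (t - h) + \<epsilon> * exp (\<kappa> * (t - h)) < W j t + \<epsilon> * exp (\<kappa> * t)"
      using DERIV_pos_inc_left[OF D pos] by blast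
    define h where "h = min h0 d / 2"
    have "h > 0" "h < h0" "h < d" using h0 d by (auto simp: h_def)
    then have "W j (t - h) + \<epsilon> * exp (\<kappa> * (t - h)) < 0"
      using h0 W0 by (auto simp: E_def)
    moreover have "W j (t - h) + \<epsilon> * exp (\<kappa> * (t - h)) > 0"
      using d \<open>h > 0\<close> \<open>h < d\<close> by auto
    ultimately show False by simp
  qed
next
  fix j :: int assume act: "\<zeta> t \<le> of_int j \<and> of_int j \<le> \<xi> t"
  define E where "E = \<epsilon> * exp (\<kappa> * t)"
  have E0: "E > 0" using eps by (simp add: E_def)
  have nn: "W k t + E \<ge> 0 \<and> Q k t + E \<ge> 0" if "\<zeta> t - 1 \<le> of_int k" "of_int k \<le> \<xi> t + 1" for k
    using left_nonneg[OF t g that] by (simp add: E_def)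
  have nj: "W j t + E \<ge> 0 \<and> Q j t + E \<ge> 0" using nn act by auto
  have nj2: "W (j-1) t + E \<ge> 0 \<and> Q (j-1) t + E \<ge> 0" using nn act by auto
  obtain d where d: "d > 0" "\<forall>s. t - d < s \<and> s < t \<longrightarrow>
     W j s + \<epsilon> * exp (\<kappa> * s) > 0 \<and> Q j s + \<epsilon> * exp (\<kappa> * s) > 0"
    using left_pos[OF t g] act by blast
  have dexp: "((\<lambda>s. \<epsilon> * exp (\<kappa> * s)) has_real_derivative \<kappa> * E) (at t)"
    by (auto intro!: derivative_eq_intros simp: E_def)
  have kk: "\<kappa> - M - 2 * \<alpha> > 0" using kap M0 alpha_pos beta_pos by auto
  have cM: "c t j \<le> M" using Mb t by (meson abs_le_D1 less_imp_le)
  show "Q j t + \<epsilon> * exp (\<kappa> * t) > 0"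
  proof (rule ccontr)
    assume "\<not> Q j t + \<epsilon> * exp (\<kappa> * t) > 0"
    then have Q0: "Q j t = - E" using nj by (simp add: E_def)
    have "Q' j t \<ge> c t j * Q j t + \<alpha> * (W j t + W (j - 1) t)"
      using ineqQ[OF t] act by auto
    moreover have "\<alpha> * (W j t + W (j - 1) t) \<ge> \<alpha> * (- 2 * E)"
      using nj nj2 alpha_pos by (intro mult_left_mono) auto
    moreover have "c t j * Q j t \<ge> - M * E"
      using Q0 cM E0 by (simp add: mult_right_mono)
    ultimately have "Q' j t + \<kappa> * E \<ge> (\<kappa> - M - 2 * \<alpha>) * E"
      by (simp add: algebra_simps)
    moreover have "(\<kappa> - M - 2 * \<alpha>) * E > 0" using kk E0 by simp
    ultimately have pos: "Q' j t + \<kappa> * E > 0" by linarith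
    have D: "((\<lambda>s. Q j s + \<epsilon> * exp (\<kappa> * s)) has_real_derivative Q' j t + \<kappa> * E) (at t)"
      by (intro DERIV_add Q_at[OF t] dexp)
    obtain h0 where h0: "h0 > 0" "\<forall>h>0. h < h0 \<longrightarrow>
        Q j (t - h) + \<epsilon> * exp (\<kappa> * (t - h)) < Q j t + \<epsilon> * exp (\<kappa> * t)"
      using DERIV_pos_inc_left[OF D pos] by blast
    define h where "h = min h0 d / 2"
    have "h > 0" "h < h0" "h < d" using h0 d by (auto simp: h_def)
    then have "Q j (t - h) + \<epsilon> * exp (\<kappa> * (t - h)) < 0"
      using h0 Q0 by (auto simp: E_def)
    moreover have "Q j (t - h) + \<epsilon> * exp (\<kappa> * (t - h)) > 0"
      using d \<open>h > 0\<close> \<open>h < d\<close> by auto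
    ultimately show False by simp
  qed
qed

lemma right_good:
  assumes t: "t \<ge> 0" and g: "good t"
  shows "eventually good (at_right t)"
proof -
  have lz: "(\<zeta> \<longlongrightarrow> \<zeta> t) (at_right t)"
    using zeta_cont t unfolding continuous_on_def
    by (auto intro: tendsto_within_subset)
  have lx: "(\<xi> \<longlongrightarrow> \<xi> t) (at_right t)"
    using xi_cont t unfolding continuous_on_def
    by (auto intro: tendsto_within_subset)
  have lW: "((\<lambda>s. W j s + \<epsilon> * exp (\<kappa> * s)) \<longlongrightarrow> W j t + \<epsilon> * exp (\<kappa> * t)) (at_right t)" for j
  proof -
    have "continuous (at t within {0..}) (W j)" using DERIV_continuous[OF W_deriv[OF t]] .
    then have "(W j \<longlongrightarrow> W j t) (at_right t)"
      unfolding continuous_within using t by (auto intro: tendsto_within_subset)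
    then show ?thesis by (auto intro!: tendsto_intros)
  qed
  have lQ: "((\<lambda>s. Q j s + \<epsilon> * exp (\<kappa> * s)) \<longlongrightarrow> Q j t + \<epsilon> * exp (\<kappa> * t)) (at_right t)" for j
  proof -
    have "continuous (at t within {0..}) (Q j)" using DERIV_continuous[OF Q_deriv[OF t]] .
    then have "(Q j \<longlongrightarrow> Q j t) (at_right t)"
      unfolding continuous_within using t by (auto intro: tendsto_within_subset)
    then show ?thesis by (auto intro!: tendsto_intros)
  qed
  define F where "F = {j::int. \<zeta> t - 1/2 < of_int j \<and> of_int j < \<xi> t + 1/2}"
  have "F \<subseteq> {\<lfloor>\<zeta> t\<rfloor> - 1 .. \<lceil>\<xi> t\<rceil> + 1}"
    unfolding F_def by (auto; linarith)
  then have finF: "finite F" by (rule finite_subset) simp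
  have evj: "\<forall>j\<in>F. eventually (\<lambda>s. \<zeta> s \<le> of_int j \<and> of_int j \<le> \<xi> s \<longrightarrow>
      W j s + \<epsilon> * exp (\<kappa> * s) > 0 \<and> Q j s + \<epsilon> * exp (\<kappa> * s) > 0) (at_right t)"
  proof
    fix j assume "j \<in> F"
    consider "\<zeta> t \<le> of_int j \<and> of_int j \<le> \<xi> t" | "of_int j < \<zeta> t" | "\<xi> t < of_int j"
      by linarith
    then show "eventually (\<lambda>s. \<zeta> s \<le> of_int j \<and> of_int j \<le> \<xi> s \<longrightarrow>
      W j s + \<epsilon> * exp (\<kappa> * s) > 0 \<and> Q j s + \<epsilon> * exp (\<kappa> * s) > 0) (at_right t)"
    proof cases
      case 1
      then have "W j t + \<epsilon> * exp (\<kappa> * t) > 0" "Q j t + \<epsilon> * exp (\<kappa> * t) > 0"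
        using g unfolding good_def by auto
      then have "eventually (\<lambda>s. W j s + \<epsilon> * exp (\<kappa> * s) > 0) (at_right t)"
        "eventually (\<lambda>s. Q j s + \<epsilon> * exp (\<kappa> * s) > 0) (at_right t)"
        using order_tendstoD(1)[OF lW] order_tendstoD(1)[OF lQ] by auto
      then show ?thesis by eventually_elim auto
    next
      case 2
      then have "eventually (\<lambda>s. of_int j < \<zeta> s) (at_right t)"
        using order_tendstoD(1)[OF lz] by auto
      then show ?thesis by eventually_elim auto
    next
      case 3
      then have "eventually (\<lambda>s. \<xi> s < of_int j) (at_right t)"
        using order_tendstoD(2)[OF lx] by auto
      then show ?thesis by eventually_elim auto
    qed
  qed
  have e1: "eventually (\<lambda>s. \<zeta> t - 1/2 < \<zeta> s) (at_right t)"
    using order_tendstoD(1)[OF lz] by auto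
  have e2: "eventually (\<lambda>s. \<xi> s < \<xi> t + 1/2) (at_right t)"
    using order_tendstoD(2)[OF lx] by auto
  from eventually_ball_finite[OF finF evj] e1 e2 show ?thesis
  proof eventually_elim
    case (elim s)
    show ?case unfolding good_def
    proof (intro allI impI)
      fix j :: int assume a: "\<zeta> s \<le> of_int j \<and> of_int j \<le> \<xi> s"
      then have "j \<in> F" using elim unfolding F_def by auto
      then show "W j s + \<epsilon> * exp (\<kappa> * s) > 0 \<and> Q j s + \<epsilon> * exp (\<kappa> * s) > 0"
        using elim a by blast
    qed
  qed
qed

lemma all_good: "t \<ge> 0 \<Longrightarrow> good t"
proof (rule ccontr)
  assume t: "t \<ge> 0" "\<not> good t"
  define S where "S = {s. s \<ge> 0 \<and> \<not> good s}"
  have ne: "S \<noteq> {}" using t by (auto simp: S_def)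
  have bb: "bdd_below S" unfolding S_def by (rule bdd_belowI[of _ 0]) auto
  define T where "T = Inf S"
  have T0: "T \<ge> 0" unfolding T_def using ne by (intro cInf_greatest) (auto simp: S_def)
  have below: "good s" if "0 \<le> s" "s < T" for s
  proof (rule ccontr)
    assume "\<not> good s"
    then have "s \<in> S" using that by (auto simp: S_def)
    then have "T \<le> s" unfolding T_def using bb by (rule cInf_lower)
    then show False using that by simp
  qed
  have gT: "good T"
  proof (cases "T = 0")
    case True then show ?thesis using good0 by simp
  next
    case False
    then have "T > 0" using T0 by simp
    then show ?thesis using below by (intro first_good) auto
  qed
  have "eventually good (at_right T)" by (rule right_good[OF T0 gT])
  then obtain b where b: "b > T" "\<forall>y>T. y < b \<longrightarrow> good y"
    unfolding eventually_at_right[of T "T+1", OF less_add_one] by blast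
  have "b \<le> T" unfolding T_def
  proof (rule cInf_greatest[OF ne])
    fix s assume "s \<in> S"
    then have "s \<ge> 0" "\<not> good s" by (auto simp: S_def)
    then show "b \<le> s" using below b gT by (metis T_def linorder_not_le not_less_iff_gr_or_eq)
  qed
  then show False using b by simp
qed

lemma all_good':
  "t \<ge> 0 \<Longrightarrow> \<zeta> t \<le> of_int j \<Longrightarrow> of_int j \<le> \<xi> t \<Longrightarrow>
     W j t + \<epsilon> * exp (\<kappa> * t) > 0 \<and> Q j t + \<epsilon> * exp (\<kappa> * t) > 0"
  using all_good unfolding good_def by blast

end

theorem propositionB6:
  fixes \<alpha> \<beta> :: real
    and c :: "real \<Rightarrow> int \<Rightarrow> real"
    and \<zeta> \<xi> :: "real \<Rightarrow> real"
    and W Q W' Q' :: "int \<Rightarrow> real \<Rightarrow> real"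
  assumes alpha_pos: "\<alpha> > 0" and beta_pos: "\<beta> > 0"
    and c_bdd: "\<exists>M. \<forall>t\<ge>0. \<forall>j. \<bar>c t j\<bar> \<le> M"
    and zeta_cont: "continuous_on {0..} \<zeta>"
    and xi_cont: "continuous_on {0..} \<xi>"
    and W_deriv: "\<And>j t. t \<ge> 0 \<Longrightarrow> (W j has_real_derivative W' j t) (at t within {0..})"
    and W'_cont: "\<And>j. continuous_on {0..} (W' j)"
    and Q_deriv: "\<And>j t. t \<ge> 0 \<Longrightarrow> (Q j has_real_derivative Q' j t) (at t within {0..})"
    and Q'_cont: "\<And>j. continuous_on {0..} (Q' j)"
    and ineqW: "\<And>t j. t > 0 \<Longrightarrow> \<zeta> t \<le> of_int j \<Longrightarrow> of_int j \<le> \<xi> t \<Longrightarrow>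
        W' j t \<ge> - 2 * \<alpha> * W j t + \<beta> * (Q j t + Q (j + 1) t)"
    and ineqQ: "\<And>t j. t > 0 \<Longrightarrow> \<zeta> t \<le> of_int j \<Longrightarrow> of_int j \<le> \<xi> t \<Longrightarrow>
        Q' j t \<ge> c t j * Q j t + \<alpha> * (W j t + W (j - 1) t)"
    and init: "\<And>j. \<zeta> 0 - 1 \<le> of_int j \<Longrightarrow> of_int j \<le> \<xi> 0 + 1 \<Longrightarrow>
        W j 0 \<ge> 0 \<and> Q j 0 \<ge> 0"
    and bdry: "\<And>t j. t > 0 \<Longrightarrow>
        ((\<zeta> t - 1 \<le> of_int j \<and> of_int j < \<zeta> t) \<or> (\<xi> t < of_int j \<and> of_int j \<le> \<xi> t + 1)) \<Longrightarrow>
        W j t \<ge> 0 \<and> Q j t \<ge> 0"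
  shows "\<forall>t>0. \<forall>j::int. \<zeta> t \<le> of_int j \<and> of_int j \<le> \<xi> t \<longrightarrow> W j t \<ge> 0 \<and> Q j t \<ge> 0"
proof (intro allI impI)
  fix t :: real and j :: int
  assume t: "t > 0" and act: "\<zeta> t \<le> of_int j \<and> of_int j \<le> \<xi> t"
  obtain M0 where M0: "\<forall>t\<ge>0. \<forall>j. \<bar>c t j\<bar> \<le> M0" using c_bdd by blast
  define \<kappa> where "\<kappa> = 2 * \<alpha> + 2 * \<beta> + M0 + 1"
  have key: "W j t + \<epsilon> * exp (\<kappa> * t) > 0 \<and> Q j t + \<epsilon> * exp (\<kappa> * t) > 0" if eps: "\<epsilon> > 0" for \<epsilon>
    by (rule all_good'[of \<alpha> \<beta> c M0 \<kappa> \<epsilon> \<zeta> \<xi> W W' Q Q' t j])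
      (use t act eps alpha_pos beta_pos M0 \<kappa>_def zeta_cont xi_cont W_deriv Q_deriv ineqW ineqQ init bdry in auto)
  have "W j t \<ge> 0"
  proof (rule ccontr)
    assume n: "\<not> W j t \<ge> 0"
    define e where "e = - W j t / (2 * exp (\<kappa> * t))"
    have "e > 0" using n by (simp add: e_def divide_neg_pos)
    moreover have "W j t + e * exp (\<kappa> * t) = W j t / 2" by (simp add: e_def)
    ultimately show False using key[of e] n by auto
  qed
  moreover have "Q j t \<ge> 0"
  proof (rule ccontr)
    assume n: "\<not> Q j t \<ge> 0"
    define e where "e = - Q j t / (2 * exp (\<kappa> * t))"
    have "e > 0" using n by (simp add: e_def divide_neg_pos)
    moreover have "Q j t + e * exp (\<kappa> * t) = Q j t / 2" by (simp add: e_def)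
    ultimately show False using key[of e] n by auto
  qed
  ultimately show "W j t \<ge> 0 \<and> Q j t \<ge> 0" by simp
qed

end
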